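(* For every $\alpha<1.5$ there exist reals $0<v_1<\dots<v_n$ and a distribution $\mathcal{D}$ on $\{v_1,\dots,v_n\}$ with full support such that no signaling scheme for $\mathcal{D}$ is $\alpha$-majorized.
   Context: Values and prior. $v_0:=0$, $f_{\mathcal{D}}$ is the mass function of $\mathcal{D}$, $F_{\mathcal{D}}$ its CDF, and $G_S(p)=\Pr_{v\sim S}[v\ge p]$. Signals and pricing. A signal is a distribution $S$ on $\{v_1,\dots,v_n\}$. The seller posts $p^*_S$, the smallest $v$ in the support of $S$ maximizing $v\,G_S(v)$. The surplus of value $v$ is $cs_v(S)=\mathbb{1}[v\ge p^*_S](v-p^*_S)$. Signaling schemes. A signaling scheme is $\mathcal{Z}=\{(S_q,\gamma_q)\}$ with $\gamma_q\ge0$, $\sum\gamma_q=1$ and $\sum_q\gamma_q f_{S_q}=f_{\mathcal{D}}$. Its expected consumer surplus at $v_i$ is $cs_{v_i}(\mathcal{Z})=\sum_q cs_{v_i}(S_q)\gamma_q f_{S_q}(v_i)/f_{\mathcal{D}}(v_i)$. Majorization. The surplus-mass function $s_{\mathcal{Z}}$ on $(0,1]$ equals $cs_{v_i}(\mathcal{Z})$ on $(F_{\mathcal{D}}(v_{i-1}),F_{\mathcal{D}}(v_i)]$. For a finite step function $f$ on $(0,1]$, $\mathrm{Pf}(f,m)=\int_0^m f_{\mathrm{sorted}}$, where $f_{\mathrm{sorted}}$ rearranges the steps of $f$ in ascending order. $\mathcal{Z}$ is $\alpha$-majorized if $\alpha\,\mathrm{Pf}(s_{\mathcal{Z}},m)\ge\mathrm{Pf}(s_{\mathcal{Z}'},m)$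 for every signaling scheme $\mathcal{Z}'$ for $\mathcal{D}$ and every $m\in(0,1]$. *)

theory Defs
  imports "HOL-Analysis.Analysis"
begin

text \<open>Values are v 1 < ... < v n (indices 1..n); a distribution / signal on
  the values is a mass function on the indices {1..n}.\<close>

definition is_dist :: "nat \<Rightarrow> (nat \<Rightarrow> real) \<Rightarrow> bool" where
  "is_dist n s \<longleftrightarrow> (\<forall>i\<in>{1..n}. 0 \<le> s i) \<and> (\<Sum>i\<in>{1..n}. s i) = 1"

text \<open>G_S(v_j) = Pr_{v ~ S}[v \<ge> v_j]; since values are strictly increasing this
  is the mass of indices j..n.\<close>
definition G :: "nat \<Rightarrow> (nat \<Rightarrow> real) \<Rightarrow> nat \<Rightarrow> real" where
  "G n s j = (\<Sum>i\<in>{j..n}. s i)"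

definition supp :: "nat \<Rightarrow> (nat \<Rightarrow> real) \<Rightarrow> nat set" where
  "supp n s = {i\<in>{1..n}. 0 < s i}"

definition price_idx :: "nat \<Rightarrow> (nat \<Rightarrow> real) \<Rightarrow> (nat \<Rightarrow> real) \<Rightarrow> nat" where
  "price_idx n v s = (LEAST j. j \<in> supp n s \<and>
      (\<forall>k\<in>supp n s. v k * G n s k \<le> v j * G n s j))"

definition price :: "nat \<Rightarrow> (nat \<Rightarrow> real) \<Rightarrow> (nat \<Rightarrow> real) \<Rightarrow> real" where
  "price n v s = v (price_idx n v s)"

definition cs :: "nat \<Rightarrow> (nat \<Rightarrow> real) \<Rightarrow> (nat \<Rightarrow> real) \<Rightarrow> nat \<Rightarrow> real" where
  "cs n v s i = (if price n v s \<le> v i then v i - price n v s else 0)"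

definition is_scheme :: "nat \<Rightarrow> (nat \<Rightarrow> real) \<Rightarrow> nat set \<Rightarrow> (nat \<Rightarrow> nat \<Rightarrow> real)
    \<Rightarrow> (nat \<Rightarrow> real) \<Rightarrow> bool" where
  "is_scheme n f Q S \<gamma> \<longleftrightarrow> finite Q \<and> (\<forall>q\<in>Q. 0 \<le> \<gamma> q \<and> is_dist n (S q)) \<and>
     (\<Sum>q\<in>Q. \<gamma> q) = 1 \<and> (\<forall>i\<in>{1..n}. (\<Sum>q\<in>Q. \<gamma> q * S q i) = f i)"

definition cs_scheme :: "nat \<Rightarrow> (nat \<Rightarrow> real) \<Rightarrow> (nat \<Rightarrow> real) \<Rightarrow> nat set
    \<Rightarrow> (nat \<Rightarrow> nat \<Rightarrow> real) \<Rightarrow> (nat \<Rightarrow> real) \<Rightarrow> nat \<Rightarrow> real" where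
  "cs_scheme n v f Q S \<gamma> i = (\<Sum>q\<in>Q. cs n v (S q) i * \<gamma> q * S q i / f i)"

text \<open>Step function on (0, total length] given by a list of (length, value) pieces.\<close>
fun step_fun :: "(real \<times> real) list \<Rightarrow> real \<Rightarrow> real" where
  "step_fun [] x = 0"
| "step_fun ((l, c) # ps) x = (if x \<le> l then c else step_fun ps (x - l))"

text \<open>Pf(f, m) = integral over (0, m] of the ascending rearrangement of the steps.\<close>
definition Pf :: "(real \<times> real) list \<Rightarrow> real \<Rightarrow> real" where
  "Pf ps m = integral {0..m} (step_fun (sort_key snd ps))"

definition surplus_mass :: "nat \<Rightarrow> (nat \<Rightarrow> real) \<Rightarrow> (nat \<Rightarrow> real) \<Rightarrow> nat set
    \<Rightarrow> (nat \<Rightarrow> nat \<Rightarrow> real) \<Rightarrow> (nat \<Rightarrow> real) \<Rightarrow> (real \<times> real) list" where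
  "surplus_mass n v f Q S \<gamma> = map (\<lambda>i. (f i, cs_scheme n v f Q S \<gamma> i)) [1..<n+1]"

definition alpha_majorized :: "real \<Rightarrow> nat \<Rightarrow> (nat \<Rightarrow> real) \<Rightarrow> (nat \<Rightarrow> real) \<Rightarrow> nat set
    \<Rightarrow> (nat \<Rightarrow> nat \<Rightarrow> real) \<Rightarrow> (nat \<Rightarrow> real) \<Rightarrow> bool" where
  "alpha_majorized \<alpha> n v f Q S \<gamma> \<longleftrightarrow>
     (\<forall>Q' S' \<gamma>'. is_scheme n f Q' S' \<gamma>' \<longrightarrow>
        (\<forall>m. 0 < m \<and> m \<le> 1 \<longrightarrow>
           Pf (surplus_mass n v f Q' S' \<gamma>') m \<le> \<alpha> * Pf (surplus_mass n v f Q S \<gamma>) m))"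

end

theory Submission
  imports Defs
begin


fun pfl :: "(real \<times> real) list \<Rightarrow> real \<Rightarrow> real" where
  "pfl [] m = 0"
| "pfl ((l, c) # ps) m = (if m \<le> l then c * m else c * l + pfl ps (m - l))"

lemma step_fun_integral:
  assumes "\<forall>p\<in>set ps. 0 < fst p" "0 \<le> m"
  shows "(step_fun ps has_integral pfl ps m) {0..m}"
  using assms
proof (induction ps arbitrary: m)
  case Nil
  then show ?case by simp
next
  case (Cons p ps)
  obtain l c where p: "p = (l, c)" by (cases p)
  have l: "0 < l" using Cons.prems p by auto
  show ?case
  proof (cases "m \<le> l")
    case True
    have "((\<lambda>x. c) has_integral c * m) {0..m}"
      using has_integral_const_real[of c 0 m] Cons.prems by (simp add: mult.commute)
    then show ?thesis using True p
      by (rule_tac has_integral_eq[rotated]) auto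
  next
    case False
    have i1: "(step_fun (p # ps) has_integral c * l) {0..l}"
    proof -
      have "((\<lambda>x. c) has_integral c * l) {0..l}"
        using has_integral_const_real[of c 0 l] l by (simp add: mult.commute)
      then show ?thesis using p
        by (rule_tac has_integral_eq[rotated]) auto
    qed
    have ih: "(step_fun ps has_integral pfl ps (m - l)) {0..m - l}"
      using Cons.IH Cons.prems False by auto
    have "((\<lambda>x. step_fun ps (1 *\<^sub>R x + - l)) has_integral (pfl ps (m - l) /\<^sub>R 1 ^ DIM(real)))
           (cbox ((0 - - l) /\<^sub>R 1) ((m - l - - l) /\<^sub>R 1))"
      using has_integral_affinity'[of "step_fun ps" "pfl ps (m - l)" 0 "m - l" 1 "-l"] ih by simp
    then have i2': "((\<lambda>x. step_fun ps (x - l)) has_integral pfl ps (m - l)) {l..m}"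
      by simp
    have i2: "(step_fun (p # ps) has_integral pfl ps (m - l)) {l..m}"
      by (rule has_integral_spike_finite[OF _ _ i2', of "{l}"]) (auto simp: p)
    have i3: "(step_fun (p # ps) has_integral c * l + pfl ps (m - l)) {0..m}"
      using has_integral_combine[OF _ _ i1 i2] l False by auto
    have eq: "pfl (p # ps) m = c * l + pfl ps (m - l)" using False p by simp
    show ?thesis unfolding eq by (rule i3)
  qed
qed



lemma Pf_pfl:
  assumes "\<forall>p\<in>set ps. 0 < fst p" "0 \<le> m"
  shows "Pf ps m = pfl (sort_key snd ps) m"
proof -
  have "\<forall>p\<in>set (sort_key snd ps). 0 < fst p" using assms by simp
  then show ?thesis unfolding Pf_def using step_fun_integral assms(2) by (blast intro: integral_unique)
qed

lemma sum13: "(\<Sum>i\<in>{1..3::nat}. g i) = g 1 + g 2 + (g 3 :: real)"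
proof -
  have "{1..3::nat} = {1,2,3}" by auto
  then show ?thesis by simp
qed

lemma G1: "G 3 s 1 = s 1 + s 2 + s 3" unfolding G_def by (rule sum13)
lemma G2: "G 3 s 2 = s 2 + s 3"
proof -
  have "{2..3::nat} = {2,3}" by auto
  then show ?thesis unfolding G_def by simp
qed
lemma G3: "G 3 s 3 = s 3" unfolding G_def by simp

lemma price_idx_props:
  assumes "is_dist n s"
  shows "price_idx n v s \<in> supp n s \<and>
         (\<forall>k\<in>supp n s. v k * G n s k \<le> v (price_idx n v s) * G n s (price_idx n v s))"
proof -
  have fin: "finite (supp n s)" unfolding supp_def by simp
  have ne: "supp n s \<noteq> {}"
  proof
    assume e: "supp n s = {}"
    then have "\<forall>i\<in>{1..n}. s i = 0" using assms unfolding supp_def is_dist_def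
      by (metis (mono_tags, lifting) empty_iff mem_Collect_eq order_le_less)
    then have "(\<Sum>i\<in>{1..n}. s i) = 0" by simp
    then show False using assms unfolding is_dist_def by simp
  qed
  define M where "M = Max ((\<lambda>k. v k * G n s k) ` supp n s)"
  have "M \<in> (\<lambda>k. v k * G n s k) ` supp n s" unfolding M_def using fin ne by simp
  then obtain j where j: "j \<in> supp n s" "v j * G n s j = M" by auto
  have "\<forall>k\<in>supp n s. v k * G n s k \<le> M" unfolding M_def using fin by simp
  then have "\<exists>j. j \<in> supp n s \<and> (\<forall>k\<in>supp n s. v k * G n s k \<le> v j * G n s j)"
    using j by metis
  then show ?thesis unfolding price_idx_def by (rule LeastI_ex)
qed

lemma price_idx_eq:
  assumes "j \<in> supp n s" "\<forall>k\<in>supp n s. v k * G n s k \<le> v j * G n s j"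
    "\<forall>k\<in>supp n s. k < j \<longrightarrow> v k * G n s k < v j * G n s j"
  shows "price_idx n v s = j"
  unfolding price_idx_def
proof (rule Least_equality)
  show "j \<in> supp n s \<and> (\<forall>k\<in>supp n s. v k * G n s k \<le> v j * G n s j)" using assms by auto
next
  fix y assume y: "y \<in> supp n s \<and> (\<forall>k\<in>supp n s. v k * G n s k \<le> v y * G n s y)"
  show "j \<le> y"
  proof (rule ccontr)
    assume "\<not> j \<le> y"
    then have "v y * G n s y < v j * G n s j" using assms(3) y by auto
    moreover have "v j * G n s j \<le> v y * G n s y" using y assms(1) by auto
    ultimately show False by simp
  qed
qed

definition v0 :: "nat \<Rightarrow> real" where
  "v0 i = (if i = 1 then 10 else if i = 2 then 11 else 15)"
definition f0 :: "nat \<Rightarrow> real" where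
  "f0 i = (if i = 1 then 1/41 else if i = 2 then 10/41 else 30/41)"

lemma cs_nonneg: "0 \<le> cs n v s i" unfolding cs_def by auto

lemma supp_sub: "supp n s \<subseteq> {1..n}" unfolding supp_def by auto

lemma per_signal:
  assumes "is_dist 3 s"
  shows "16 * s 2 * cs 3 v0 s 2 + s 3 * cs 3 v0 s 3 \<le> 50 * s 1 + 11 * s 2"
    and "cs 3 v0 s 1 = 0"
proof -
  let ?j = "price_idx 3 v0 s"
  have P: "?j \<in> supp 3 s" "\<forall>k\<in>supp 3 s. v0 k * G 3 s k \<le> v0 ?j * G 3 s ?j"
    using price_idx_props[OF assms] by auto
  have nn: "0 \<le> s 1" "0 \<le> s 2" "0 \<le> s 3" using assms unfolding is_dist_def by auto
  have j3: "?j = 1 \<or> ?j = 2 \<or> ?j = 3" using P(1) supp_sub by fastforce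
  have s2: "0 < s 2 \<Longrightarrow> 2 \<in> supp 3 s" and s3: "0 < s 3 \<Longrightarrow> 3 \<in> supp 3 s"
    unfolding supp_def by auto
  show "cs 3 v0 s 1 = 0" using j3 unfolding cs_def price_def v0_def by auto
  from j3 show "16 * s 2 * cs 3 v0 s 2 + s 3 * cs 3 v0 s 3 \<le> 50 * s 1 + 11 * s 2"
  proof (elim disjE)
    assume j: "?j = 1"
    have c: "cs 3 v0 s 2 = 1" "cs 3 v0 s 3 = 5" unfolding cs_def price_def v0_def j by auto
    have "s 2 + s 3 \<le> 10 * s 1"
    proof (cases "0 < s 2")
      case True
      have "v0 2 * G 3 s 2 \<le> v0 ?j * G 3 s ?j" using P(2) s2 True by blast
      then show ?thesis unfolding j G1 G2 v0_def by simp
    next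
      case False
      then have "s 2 = 0" using nn by simp
      show ?thesis
      proof (cases "0 < s 3")
        case True
        have "v0 3 * G 3 s 3 \<le> v0 ?j * G 3 s ?j" using P(2) s3 True by blast
        then show ?thesis using \<open>s 2 = 0\<close> nn unfolding j G1 G3 v0_def by simp
      next
        case False
        then show ?thesis using nn \<open>s 2 = 0\<close> by simp
      qed
    qed
    then show ?thesis unfolding c using nn by simp
  next
    assume j: "?j = 2"
    have c: "cs 3 v0 s 2 = 0" "cs 3 v0 s 3 = 4" unfolding cs_def price_def v0_def j by auto
    have "4 * s 3 \<le> 11 * s 2"
    proof (cases "0 < s 3")
      case True
      have "v0 3 * G 3 s 3 \<le> v0 ?j * G 3 s ?j" using P(2) s3 True by blast
      then show ?thesis unfolding j G2 G3 v0_def by simp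
    next
      case False
      then show ?thesis using nn by simp
    qed
    then show ?thesis unfolding c using nn by simp
  next
    assume j: "?j = 3"
    have c: "cs 3 v0 s 2 = 0" "cs 3 v0 s 3 = 0" unfolding cs_def price_def v0_def j by auto
    show ?thesis unfolding c using nn by simp
  qed
qed



lemma y_eq:
  assumes "f i \<noteq> 0"
  shows "f i * cs_scheme n v f Q S \<gamma> i = (\<Sum>q\<in>Q. \<gamma> q * (S q i * cs n v (S q) i))"
proof -
  have "f i * cs_scheme n v f Q S \<gamma> i = f i * ((\<Sum>q\<in>Q. cs n v (S q) i * \<gamma> q * S q i) / f i)"
    unfolding cs_scheme_def by (simp add: sum_divide_distrib)
  also have "\<dots> = (\<Sum>q\<in>Q. cs n v (S q) i * \<gamma> q * S q i)" using assms by simp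
  also have "\<dots> = (\<Sum>q\<in>Q. \<gamma> q * (S q i * cs n v (S q) i))" by (simp add: algebra_simps)
  finally show ?thesis .
qed

lemma scheme_bounds:
  assumes sch: "is_scheme 3 f0 Q S \<gamma>"
  shows "cs_scheme 3 v0 f0 Q S \<gamma> 1 = 0" "0 \<le> cs_scheme 3 v0 f0 Q S \<gamma> 2"
    "0 \<le> cs_scheme 3 v0 f0 Q S \<gamma> 3"
    "16 * (f0 2 * cs_scheme 3 v0 f0 Q S \<gamma> 2) + f0 3 * cs_scheme 3 v0 f0 Q S \<gamma> 3 \<le> 160/41"
proof -
  have fin: "finite Q" and g: "\<And>q. q \<in> Q \<Longrightarrow> 0 \<le> \<gamma> q" and d: "\<And>q. q \<in> Q \<Longrightarrow> is_dist 3 (S q)"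
    and marg: "\<And>i. i \<in> {1..3} \<Longrightarrow> (\<Sum>q\<in>Q. \<gamma> q * S q i) = f0 i"
    using sch unfolding is_scheme_def by auto
  have nn: "\<And>q i. q \<in> Q \<Longrightarrow> i \<in> {1..3} \<Longrightarrow> 0 \<le> S q i" using d unfolding is_dist_def by auto
  show "cs_scheme 3 v0 f0 Q S \<gamma> 1 = 0" unfolding cs_scheme_def using per_signal(2)[OF d] by simp
  show "0 \<le> cs_scheme 3 v0 f0 Q S \<gamma> 2" unfolding cs_scheme_def f0_def
    using g nn cs_nonneg by (auto intro!: sum_nonneg)
  show "0 \<le> cs_scheme 3 v0 f0 Q S \<gamma> 3" unfolding cs_scheme_def f0_def
    using g nn cs_nonneg by (auto intro!: sum_nonneg)
  have f02: "f0 2 \<noteq> 0" and f03: "f0 3 \<noteq> 0" by (auto simp: f0_def)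
  have "16 * (f0 2 * cs_scheme 3 v0 f0 Q S \<gamma> 2) + f0 3 * cs_scheme 3 v0 f0 Q S \<gamma> 3
      = (\<Sum>q\<in>Q. \<gamma> q * (16 * S q 2 * cs 3 v0 (S q) 2 + S q 3 * cs 3 v0 (S q) 3))"
    unfolding y_eq[of f0 2, OF f02] y_eq[of f0 3, OF f03]
    by (simp add: sum_distrib_left sum.distrib algebra_simps)
  also have "\<dots> \<le> (\<Sum>q\<in>Q. \<gamma> q * (50 * S q 1 + 11 * S q 2))"
  proof (rule sum_mono)
    fix q assume q: "q \<in> Q"
    show "\<gamma> q * (16 * S q 2 * cs 3 v0 (S q) 2 + S q 3 * cs 3 v0 (S q) 3) \<le> \<gamma> q * (50 * S q 1 + 11 * S q 2)"
      using mult_left_mono[OF per_signal(1)[OF d[OF q]] g[OF q]] .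
  qed
  also have "\<dots> = 50 * (\<Sum>q\<in>Q. \<gamma> q * S q 1) + 11 * (\<Sum>q\<in>Q. \<gamma> q * S q 2)"
    by (simp add: sum_distrib_left sum.distrib algebra_simps)
  also have "\<dots> = 160/41" using marg[of 1] marg[of 2] by (simp add: f0_def)
  finally show "16 * (f0 2 * cs_scheme 3 v0 f0 Q S \<gamma> 2) + f0 3 * cs_scheme 3 v0 f0 Q S \<gamma> 3 \<le> 160/41" .
qed

lemma upt3: "[1..<3+1] = [1,2,3::nat]" by (simp add: upt_rec)

lemma sm_eq: "surplus_mass 3 v f Q S \<gamma> =
   [(f 1, cs_scheme 3 v f Q S \<gamma> 1), (f 2, cs_scheme 3 v f Q S \<gamma> 2), (f 3, cs_scheme 3 v f Q S \<gamma> 3)]"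
  unfolding surplus_mass_def upt3 by simp

lemma Pf_generic:
  assumes "0 \<le> c2" "0 \<le> c3"
  shows "Pf [(1/41, 0), (10/41, c2), (30/41, c3)] (11/41) \<le> 10/41 * c2"
    and "Pf [(1/41, 0), (10/41, c2), (30/41, c3)] 1 = 10/41 * c2 + 30/41 * c3"
proof -
  have pos: "\<forall>p\<in>set [(1/41::real, 0::real), (10/41, c2), (30/41, c3)]. 0 < fst p" by simp
  show "Pf [(1/41, 0), (10/41, c2), (30/41, c3)] (11/41) \<le> 10/41 * c2"
    unfolding Pf_pfl[OF pos, of "11/41", simplified] using assms by auto
  show "Pf [(1/41, 0), (10/41, c2), (30/41, c3)] 1 = 10/41 * c2 + 30/41 * c3"
    unfolding Pf_pfl[OF pos, of 1, simplified] using assms by auto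
qed



lemma price_idx_eq3:
  assumes "j \<in> {1..3}" "0 < s j"
    "\<forall>k\<in>{1,2,3::nat}. 0 < s k \<longrightarrow> v k * G 3 s k \<le> v j * G 3 s j"
    "\<forall>k\<in>{1,2,3::nat}. 0 < s k \<longrightarrow> k < j \<longrightarrow> v k * G 3 s k < v j * G 3 s j"
  shows "price_idx 3 v s = j"
proof -
  have e: "supp 3 s = {k\<in>{1,2,3}. 0 < s k}" unfolding supp_def by auto
  show ?thesis
  proof (rule price_idx_eq)
    show "j \<in> supp 3 s" using assms(1,2) by (simp add: supp_def)
    show "\<forall>k\<in>supp 3 s. v k * G 3 s k \<le> v j * G 3 s j" using assms(3) unfolding e by blast
    show "\<forall>k\<in>supp 3 s. k < j \<longrightarrow> v k * G 3 s k < v j * G 3 s j" using assms(4) unfolding e by blast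
  qed
qed

definition sA :: "nat \<Rightarrow> real" where "sA i = (if i = 1 then 1/3 else if i = 2 then 0 else 2/3)"
definition sB :: "nat \<Rightarrow> real" where "sB i = (if i = 1 then 0 else if i = 2 then 4/15 else 11/15)"
definition sC :: "nat \<Rightarrow> real" where "sC i = (if i = 3 then 1 else 0)"
definition sD :: "nat \<Rightarrow> real" where "sD i = (if i = 1 then 1/11 else if i = 2 then 8/11 else 2/11)"

lemma pA: "price 3 v0 sA = 10"
proof -
  have "price_idx 3 v0 sA = 1"
    by (rule price_idx_eq3) (auto simp: G1 G1[simplified] G2 G3 sA_def v0_def)
  then show ?thesis by (simp add: price_def v0_def)
qed
lemma pB: "price 3 v0 sB = 11"
proof -
  have "price_idx 3 v0 sB = 2"
    by (rule price_idx_eq3) (auto simp: G1 G1[simplified] G2 G3 sB_def v0_def)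
  then show ?thesis by (simp add: price_def v0_def)
qed
lemma pC: "price 3 v0 sC = 15"
proof -
  have "price_idx 3 v0 sC = 3"
    by (rule price_idx_eq3) (auto simp: G1 G1[simplified] G2 G3 sC_def v0_def)
  then show ?thesis by (simp add: price_def v0_def)
qed
lemma pD: "price 3 v0 sD = 10"
proof -
  have "price_idx 3 v0 sD = 1"
    by (rule price_idx_eq3) (auto simp: G1 G1[simplified] G2 G3 sD_def v0_def)
  then show ?thesis by (simp add: price_def v0_def)
qed

lemma dists: "is_dist 3 sA" "is_dist 3 sB" "is_dist 3 sC" "is_dist 3 sD"
  unfolding is_dist_def sum13 by (auto simp: sA_def sB_def sC_def sD_def)

definition S1 :: "nat \<Rightarrow> nat \<Rightarrow> real" where "S1 q = (if q = 0 then sD else if q = 1 then sB else sC)"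
definition g1 :: "nat \<Rightarrow> real" where "g1 q = (if q = 0 then 11/41 else if q = 1 then 15/82 else 45/82)"
definition S2 :: "nat \<Rightarrow> nat \<Rightarrow> real" where "S2 q = (if q = 0 then sA else if q = 1 then sB else sC)"
definition g2 :: "nat \<Rightarrow> real" where "g2 q = (if q = 0 then 3/41 else if q = 1 then 75/82 else 1/82)"

lemma sch1: "is_scheme 3 f0 {0,1,2} S1 g1"
  unfolding is_scheme_def using dists
  by (auto simp: S1_def g1_def f0_def sA_def sB_def sC_def sD_def)

lemma sch2: "is_scheme 3 f0 {0,1,2} S2 g2"
  unfolding is_scheme_def using dists
  by (auto simp: S2_def g2_def f0_def sA_def sB_def sC_def sD_def)

lemma Pf1: "Pf (surplus_mass 3 v0 f0 {0,1,2} S1 g1) (11/41) = 8/41"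
proof -
  have c: "cs_scheme 3 v0 f0 {0,1,2} S1 g1 1 = 0" "cs_scheme 3 v0 f0 {0,1,2} S1 g1 2 = 4/5"
     "cs_scheme 3 v0 f0 {0,1,2} S1 g1 3 = 16/15"
    by (simp_all add: cs_scheme_def cs_def pA pB pC pD S1_def g1_def f0_def sA_def sB_def sC_def sD_def v0_def)
  have pos: "\<forall>p\<in>set [(1/41::real, 0::real), (10/41, 4/5), (30/41, 16/15)]. 0 < fst p" by simp
  show ?thesis unfolding sm_eq c by (simp add: f0_def Pf_pfl[OF pos])
qed

lemma Pf2: "Pf (surplus_mass 3 v0 f0 {0,1,2} S2 g2) 1 = 120/41"
proof -
  have c: "cs_scheme 3 v0 f0 {0,1,2} S2 g2 1 = 0" "cs_scheme 3 v0 f0 {0,1,2} S2 g2 2 = 0"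
     "cs_scheme 3 v0 f0 {0,1,2} S2 g2 3 = 4"
    by (simp_all add: cs_scheme_def cs_def pA pB pC pD S2_def g2_def f0_def sA_def sB_def sC_def sD_def v0_def)
  have pos: "\<forall>p\<in>set [(1/41::real, 0::real), (10/41, 0), (30/41, 4)]. 0 < fst p" by simp
  show ?thesis unfolding sm_eq c by (simp add: f0_def Pf_pfl[OF pos])
qed



theorem theorem4:
  fixes \<alpha> :: real
  assumes "\<alpha> < 1.5"
  shows "\<exists>(n::nat) (v::nat \<Rightarrow> real) (f::nat \<Rightarrow> real).
           0 < v 1 \<and> (\<forall>i\<in>{1..n}. \<forall>j\<in>{1..n}. i < j \<longrightarrow> v i < v j) \<and>
           is_dist n f \<and> (\<forall>i\<in>{1..n}. 0 < f i) \<and>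
           \<not> (\<exists>Q S \<gamma>. is_scheme n f Q S \<gamma> \<and> alpha_majorized \<alpha> n v f Q S \<gamma>)"
proof (intro exI conjI)
  show "0 < v0 1" by (simp add: v0_def)
  show "\<forall>i\<in>{1..3}. \<forall>j\<in>{1..3}. i < j \<longrightarrow> v0 i < v0 j" by (auto simp: v0_def)
  show "is_dist 3 f0" unfolding is_dist_def sum13 by (auto simp: f0_def)
  show "\<forall>i\<in>{1..3}. 0 < f0 i" by (auto simp: f0_def)
  show "\<not> (\<exists>Q S \<gamma>. is_scheme 3 f0 Q S \<gamma> \<and> alpha_majorized \<alpha> 3 v0 f0 Q S \<gamma>)"
  proof
    assume "\<exists>Q S \<gamma>. is_scheme 3 f0 Q S \<gamma> \<and> alpha_majorized \<alpha> 3 v0 f0 Q S \<gamma>"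
    then obtain Q S \<gamma> where sch: "is_scheme 3 f0 Q S \<gamma>" and maj: "alpha_majorized \<alpha> 3 v0 f0 Q S \<gamma>"
      by blast
    define c2 where "c2 = cs_scheme 3 v0 f0 Q S \<gamma> 2"
    define c3 where "c3 = cs_scheme 3 v0 f0 Q S \<gamma> 3"
    have b: "cs_scheme 3 v0 f0 Q S \<gamma> 1 = 0" "0 \<le> c2" "0 \<le> c3" "16 * (10/41 * c2) + 30/41 * c3 \<le> 160/41"
      using scheme_bounds[OF sch] unfolding c2_def c3_def by (auto simp: f0_def)
    have sm: "surplus_mass 3 v0 f0 Q S \<gamma> = [(1/41, 0), (10/41, c2), (30/41, c3)]"
      unfolding sm_eq b(1) c2_def c3_def by (simp add: f0_def)
    have P1: "Pf (surplus_mass 3 v0 f0 Q S \<gamma>) (11/41) \<le> 10/41 * c2"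
      and P2: "Pf (surplus_mass 3 v0 f0 Q S \<gamma>) 1 = 10/41 * c2 + 30/41 * c3"
      unfolding sm using Pf_generic[OF b(2,3)] by auto
    have m1: "8/41 \<le> \<alpha> * Pf (surplus_mass 3 v0 f0 Q S \<gamma>) (11/41)"
      using maj sch1 unfolding alpha_majorized_def Pf1[symmetric] by auto
    have m2: "120/41 \<le> \<alpha> * (10/41 * c2 + 30/41 * c3)"
      using maj sch2 unfolding alpha_majorized_def Pf2[symmetric] P2[symmetric] by auto
    show False
    proof (cases "\<alpha> \<le> 0")
      case True
      have "\<alpha> * (10/41 * c2 + 30/41 * c3) \<le> 0"
        using True b(2,3) by (simp add: mult_nonpos_nonneg)
      then show False using m2 by simp
    next
      case False
      have "\<alpha> * Pf (surplus_mass 3 v0 f0 Q S \<gamma>) (11/41) \<le> \<alpha> * (10/41 * c2)"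
        by (rule mult_left_mono[OF P1]) (use False in simp)
      then have "8/41 \<le> \<alpha> * (10/41 * c2)" using m1 by linarith
      then have "240/41 \<le> \<alpha> * (16 * (10/41 * c2) + 30/41 * c3)"
        using m2 by (simp add: algebra_simps)
      also have "\<dots> \<le> \<alpha> * (160/41)" using mult_left_mono[OF b(4), of \<alpha>] False by simp
      also have "\<dots> < 1.5 * (160/41)" using assms by simp
      finally show False by simp
    qed
  qed
qed


end
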